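(* Let $a\in S^1$ with $a\notin\{0,\tfrac12,\tfrac14,-\tfrac14\}$ and let $W=\{0,a,\tfrac12,a+\tfrac12\}$. Then $P(W)$ holds.
   Context: Identify $S^1$ with $\mathbb{R}/\mathbb{Z}$. The group $O(2)$ acts on $S^1$ by translations $x\mapsto x+a$ and reflections $x\mapsto -x+2a$. A coloring $c:S^1\to\{R,B\}$ is distinguishing if no non-identity $\gamma\in O(2)$ satisfies $c\circ\gamma=c$. For $W\subset S^1$ with trivial pointwise stabilizer in $O(2)$, $P(W)$ holds if every precoloring $c:S^1\setminus W\to\{R,B\}$ extends to a distinguishing coloring of $S^1$. *)

theory Defs
  imports Complex_Main
begin

text \<open>The circle S^1 = R/Z is modelled by real numbers modulo the integers:
  a point of S^1 is a real number, two reals denote the same point iff their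
  difference is an integer, and functions on S^1 are 1-periodic functions on R.\<close>

definition circ_eq :: "real \<Rightarrow> real \<Rightarrow> bool" where
  "circ_eq x y \<longleftrightarrow> x - y \<in> \<int>"

definition periodic1 :: "(real \<Rightarrow> 'b) \<Rightarrow> bool" where
  "periodic1 f \<longleftrightarrow> (\<forall>x. f (x + 1) = f x)"

datatype color = R | B

text \<open>Elements of O(2): (False, t) is the translation x \<mapsto> x + t,
  (True, t) is the reflection x \<mapsto> -x + 2t.\<close>

type_synonym o2 = "bool \<times> real"

definition o2_act :: "o2 \<Rightarrow> real \<Rightarrow> real" where
  "o2_act g x = (if fst g then - x + 2 * snd g else x + snd g)"

definition o2_is_id :: "o2 \<Rightarrow> bool" where
  "o2_is_id g \<longleftrightarrow> (\<forall>x. circ_eq (o2_act g x) x)"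

definition distinguishing :: "(real \<Rightarrow> color) \<Rightarrow> bool" where
  "distinguishing c \<longleftrightarrow>
     (\<forall>g. \<not> o2_is_id g \<longrightarrow> \<not> (\<forall>x. c (o2_act g x) = c x))"

definition in_circ_set :: "real \<Rightarrow> real set \<Rightarrow> bool" where
  "in_circ_set x W \<longleftrightarrow> (\<exists>w\<in>W. circ_eq x w)"

definition trivial_pw_stab :: "real set \<Rightarrow> bool" where
  "trivial_pw_stab W \<longleftrightarrow>
     (\<forall>g. (\<forall>w\<in>W. circ_eq (o2_act g w) w) \<longrightarrow> o2_is_id g)"

definition prop_P :: "real set \<Rightarrow> bool" where
  "prop_P W \<longleftrightarrow> trivial_pw_stab W \<and>
     (\<forall>p :: real \<Rightarrow> color. periodic1 p \<longrightarrow>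
        (\<exists>c. periodic1 c \<and> (\<forall>x. \<not> in_circ_set x W \<longrightarrow> c x = p x) \<and>
             distinguishing c))"

end

theory Submission
  imports Defs
begin


lemma ce_iff: "circ_eq x y \<longleftrightarrow> x - y \<in> \<int>"
  by (simp add: circ_eq_def)

lemma zcomb:
  assumes "u \<in> \<int>" "v \<in> \<int>" "w = of_int i * u + of_int j * v + of_int k"
  shows "(w::real) \<in> \<int>"
proof -
  obtain m where m: "u = of_int m" using assms(1) Ints_cases by blast
  obtain n where n: "v = of_int n" using assms(2) Ints_cases by blast
  have "w = of_int (i*m + j*n + k)" using assms(3) m n by simp
  thus ?thesis by simp
qed

lemma zcomb1:
  assumes "u \<in> \<int>" "w = of_int i * u + of_int k"
  shows "(w::real) \<in> \<int>"
  using zcomb[OF assms(1) assms(1), of w i 0 k] assms(2) by simp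

lemma half_nI: "(1/2::real) \<notin> \<int>"
proof
  assume "(1/2::real) \<in> \<int>"
  then obtain n where "(1/2::real) = of_int n" using Ints_cases by blast
  hence "real_of_int (2*n) = 1" by simp
  hence "2*n = 1" by linarith
  thus False by presburger
qed

lemma per_int:
  assumes "periodic1 f" shows "f (x + real_of_int n) = f x"
proof (induct n rule: int_induct[where k=0])
  case base then show ?case by simp
next
  case (step1 i) 
  have "f (x + real_of_int (i+1)) = f ((x + real_of_int i) + 1)" by (simp add: algebra_simps)
  also have "\<dots> = f (x + real_of_int i)" using assms by (simp add: periodic1_def)
  finally show ?case using step1 by simp
next
  case (step2 i)
  have "f ((x + real_of_int (i - 1)) + 1) = f (x + real_of_int (i - 1))" using assms unfolding periodic1_def by blast
  moreover have "(x + real_of_int (i - 1)) + 1 = x + real_of_int i" by simp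
  ultimately have "f (x + real_of_int i) = f (x + real_of_int (i - 1))" by metis
  thus ?case using step2 by simp
qed

lemma per_cong:
  assumes "periodic1 f" "x - y \<in> \<int>" shows "f x = f y"
proof -
  obtain n where "x - y = of_int n" using assms(2) Ints_cases by blast
  hence "x = y + of_int n" by simp
  thus ?thesis using per_int[OF assms(1)] by simp
qed

lemma act_F[simp]: "o2_act (False, t) x = x + t" by (simp add: o2_act_def)
lemma act_T[simp]: "o2_act (True, s) x = - x + 2 * s" by (simp add: o2_act_def)

lemma isid_F: "o2_is_id (False, t) \<longleftrightarrow> t \<in> \<int>"
  by (simp add: o2_is_id_def circ_eq_def)

lemma isid_T: "\<not> o2_is_id (True, s)"
proof
  assume "o2_is_id (True, s)"
  hence "circ_eq (o2_act (True, s) (s + 1/4)) (s + 1/4)" unfolding o2_is_id_def by blast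
  moreover have "o2_act (True, s) (s + 1/4) - (s + 1/4) = -1/2" by simp
  ultimately have "(-1/2::real) \<in> \<int>" unfolding circ_eq_def by metis
  hence "(1/2::real) \<in> \<int>" using Ints_minus by fastforce
  thus False using half_nI by simp
qed

lemma act_shift: "(\<forall>x. o2_act g (x + t) = o2_act g x + t) \<or> (\<forall>x. o2_act g (x + t) = o2_act g x - t)"
  by (cases g; cases "fst g") (auto simp: o2_act_def)



lemma ce_cong: assumes "(x - y) - (u - v) \<in> \<int>" shows "circ_eq x y \<longleftrightarrow> circ_eq u v"
proof -
  have "x - y \<in> \<int> \<Longrightarrow> u - v \<in> \<int>" using zcomb[of "x - y" "(x - y) - (u - v)" "u - v" 1 "-1" 0] assms by simp
  moreover have "u - v \<in> \<int> \<Longrightarrow> x - y \<in> \<int>" using zcomb[of "u - v" "(x - y) - (u - v)" "x - y" 1 1 0] assms by simp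
  ultimately show ?thesis by (auto simp: circ_eq_def)
qed

lemma ce_trans_neg: assumes "circ_eq x y" "\<not> circ_eq y z" shows "\<not> circ_eq x z"
proof
  assume "circ_eq x z"
  hence "y - z \<in> \<int>" using zcomb[of "x - z" "x - y" "y - z" 1 "-1" 0] assms(1) by (simp add: circ_eq_def)
  thus False using assms(2) by (simp add: circ_eq_def)
qed

lemma ce_sym: "circ_eq x y \<longleftrightarrow> circ_eq y x"
proof -
  have "y - x = - (x - y)" "x - y = - (y - x)" by simp_all
  thus ?thesis unfolding circ_eq_def by (metis Ints_minus)
qed

lemma Ints_1': "(1::real) \<in> \<int>" by simp

lemma sh1: "circ_eq (x + 1/2) 0 \<longleftrightarrow> circ_eq x (1/2)"
  by (rule ce_cong) simp
lemma sh2: "circ_eq (x + 1/2) (1/2) \<longleftrightarrow> circ_eq x 0"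
  by (rule ce_cong) simp

locale cfg =
  fixes a :: real and p :: "real \<Rightarrow> color"
  assumes A0: "a \<notin> \<int>" and A1: "a - 1/2 \<notin> \<int>" and A2: "a - 1/4 \<notin> \<int>"
    and A3: "a + 1/4 \<notin> \<int>" and Pp: "periodic1 p"
begin

lemma sh3: "circ_eq (x + 1/2) a \<longleftrightarrow> circ_eq x (a + 1/2)"
  by (rule ce_cong) simp
lemma sh4: "circ_eq (x + 1/2) (a + 1/2) \<longleftrightarrow> circ_eq x a"
  by (rule ce_cong) simp

lemma D1: "2 * a \<notin> \<int>"
proof
  assume "2 * a \<in> \<int>"
  then obtain n where n: "2 * a = of_int n" using Ints_cases by blast
  have "n = 2*(n div 2) \<or> n = 2*(n div 2)+1" by presburger
  then obtain k where "n = 2*k \<or> n = 2*k+1" by blast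
  thus False
  proof
    assume "n = 2*k" hence "a = of_int k" using n by simp
    thus False using A0 by simp
  next
    assume "n = 2*k+1" hence "a - 1/2 = of_int k" using n by simp
    thus False using A1 by (metis Ints_of_int)
  qed
qed

lemma D2: "2 * a - 1/2 \<notin> \<int>"
proof
  assume "2 * a - 1/2 \<in> \<int>"
  then obtain n where n: "2 * a - 1/2 = of_int n" using Ints_cases by blast
  have "n = 2*(n div 2) \<or> n = 2*(n div 2)+1" by presburger
  then obtain k where "n = 2*k \<or> n = 2*k+1" by blast
  thus False
  proof
    assume "n = 2*k" hence "a - 1/4 = of_int k" using n by simp
    thus False using A2 by (metis Ints_of_int)
  next
    assume "n = 2*k+1" hence "a + 1/4 = of_int (k+1)" using n by simp
    thus False using A3 by (metis Ints_of_int)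
  qed
qed

lemma D3: "2 * a + 1/2 \<notin> \<int>"
  using D2 zcomb1[of "2 * a + 1/2" "2*a - 1/2" 1 "-1"] by auto

lemma nc_0h: "\<not> circ_eq 0 (1/2)" using half_nI zcomb1[of "0 - 1/2" "1/2" "-1" 0] by (auto simp: circ_eq_def)
lemma nc_0a: "\<not> circ_eq 0 a" using A0 zcomb1[of "0 - a" "a" "-1" 0] by (auto simp: circ_eq_def)
lemma nc_0ah: "\<not> circ_eq 0 (a + 1/2)" using A1 zcomb1[of "0 - (a+1/2)" "a - 1/2" "-1" "-1"] by (auto simp: circ_eq_def)
lemma nc_ha: "\<not> circ_eq (1/2) a" using A1 zcomb1[of "1/2 - a" "a - 1/2" "-1" 0] by (auto simp: circ_eq_def)
lemma nc_hah: "\<not> circ_eq (1/2) (a + 1/2)" using A0 zcomb1[of "1/2 - (a + 1/2)" "a" "-1" 0] by (auto simp: circ_eq_def)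
lemma nc_aah: "\<not> circ_eq a (a + 1/2)" using half_nI zcomb1[of "a - (a + 1/2)" "1/2" "-1" 0] by (auto simp: circ_eq_def)

lemmas ncs = nc_0h nc_0a nc_0ah nc_ha nc_hah nc_aah

definition Wp :: "real \<Rightarrow> bool" where
  "Wp x \<longleftrightarrow> circ_eq x 0 \<or> circ_eq x (1/2) \<or> circ_eq x a \<or> circ_eq x (a + 1/2)"

definition col :: "color \<Rightarrow> color \<Rightarrow> real \<Rightarrow> color" where
  "col e d x = (if circ_eq x 0 then e else if circ_eq x (1/2) then B
     else if circ_eq x a \<or> circ_eq x (a + 1/2) then d else p x)"

definition M0 where "M0 x \<longleftrightarrow> \<not> Wp x \<and> p x = R \<and> p (x + 1/2) = B"
definition Ms where "Ms e x \<longleftrightarrow> M0 x \<or> (e = R \<and> circ_eq x 0)"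
definition RR0 where "RR0 x \<longleftrightarrow> \<not> Wp x \<and> p x = R \<and> p (x + 1/2) = R"
definition RRs where "RRs d x \<longleftrightarrow> RR0 x \<or> (d = R \<and> (circ_eq x a \<or> circ_eq x (a + 1/2)))"

lemma Wp_sh: "Wp (x + 1/2) \<longleftrightarrow> Wp x"
  unfolding Wp_def sh1 sh2 sh3 sh4 by blast

lemma cases_x:
  obtains "circ_eq x 0" "\<not> circ_eq x (1/2)" "\<not> circ_eq x a" "\<not> circ_eq x (a + 1/2)"
  | "\<not> circ_eq x 0" "circ_eq x (1/2)" "\<not> circ_eq x a" "\<not> circ_eq x (a + 1/2)"
  | "\<not> circ_eq x 0" "\<not> circ_eq x (1/2)" "circ_eq x a" "\<not> circ_eq x (a + 1/2)"
  | "\<not> circ_eq x 0" "\<not> circ_eq x (1/2)" "\<not> circ_eq x a" "circ_eq x (a + 1/2)"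
  | "\<not> Wp x"
proof -
  have a1: "\<not> circ_eq x (1/2)" "\<not> circ_eq x a" "\<not> circ_eq x (a + 1/2)" if "circ_eq x 0"
    using ce_trans_neg[OF that nc_0h] ce_trans_neg[OF that nc_0a] ce_trans_neg[OF that nc_0ah] by auto
  have a2: "\<not> circ_eq x a" "\<not> circ_eq x (a + 1/2)" if "circ_eq x (1/2)"
    using ce_trans_neg[OF that nc_ha] ce_trans_neg[OF that nc_hah] by auto
  have a3: "\<not> circ_eq x (a + 1/2)" if "circ_eq x a"
    using ce_trans_neg[OF that nc_aah] by auto
  have s: "\<not> circ_eq x 0" if "circ_eq x y" "\<not> circ_eq y 0" for y
    using ce_trans_neg[OF that] .
  have b1: "\<not> circ_eq x 0" if "circ_eq x (1/2)" using s[OF that] nc_0h ce_sym by blast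
  have b2: "\<not> circ_eq x 0" "\<not> circ_eq x (1/2)" if "circ_eq x a"
    using s[OF that] nc_0a ce_sym ce_trans_neg[OF that] nc_ha by blast+
  have b3: "\<not> circ_eq x 0" "\<not> circ_eq x (1/2)" "\<not> circ_eq x a" if "circ_eq x (a + 1/2)"
    using s[OF that] nc_0ah ce_sym ce_trans_neg[OF that] nc_hah nc_aah by blast+
  show ?thesis using that a1 a2 a3 b1 b2 b3 unfolding Wp_def by blast
qed

lemma Ms_char: "Ms e x \<longleftrightarrow> col e d x = R \<and> col e d (x + 1/2) = B"
proof (cases x rule: cases_x)
  case 1 then show ?thesis unfolding Ms_def M0_def Wp_def col_def sh1 sh2 sh3 sh4 by auto
next
  case 2 then show ?thesis unfolding Ms_def M0_def Wp_def col_def sh1 sh2 sh3 sh4 by auto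
next
  case 3 then show ?thesis unfolding Ms_def M0_def Wp_def col_def sh1 sh2 sh3 sh4 by (cases d) auto
next
  case 4 then show ?thesis unfolding Ms_def M0_def Wp_def col_def sh1 sh2 sh3 sh4 by (cases d) auto
next
  case 5 then show ?thesis unfolding Ms_def M0_def col_def sh1 sh2 sh3 sh4 using Wp_sh
    unfolding Wp_def by auto
qed

lemma RRs_char: "RRs d x \<longleftrightarrow> col e d x = R \<and> col e d (x + 1/2) = R"
proof (cases x rule: cases_x)
  case 1 then show ?thesis unfolding RRs_def RR0_def Wp_def col_def sh1 sh2 sh3 sh4 by auto
next
  case 2 then show ?thesis unfolding RRs_def RR0_def Wp_def col_def sh1 sh2 sh3 sh4 by auto
next
  case 3 then show ?thesis unfolding RRs_def RR0_def Wp_def col_def sh1 sh2 sh3 sh4 by (cases d) auto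
next
  case 4 then show ?thesis unfolding RRs_def RR0_def Wp_def col_def sh1 sh2 sh3 sh4 by (cases d) auto
next
  case 5 then show ?thesis unfolding RRs_def RR0_def col_def sh1 sh2 sh3 sh4 using Wp_sh
    unfolding Wp_def by auto
qed

end


lemma zcomb3:
  assumes "u \<in> \<int>" "v \<in> \<int>" "w \<in> \<int>" "z = of_int i * u + of_int j * v + of_int k * w + of_int l"
  shows "(z::real) \<in> \<int>"
proof -
  obtain m where m: "u = of_int m" using assms(1) Ints_cases by blast
  obtain n where n: "v = of_int n" using assms(2) Ints_cases by blast
  obtain q where q: "w = of_int q" using assms(3) Ints_cases by blast
  have "z = of_int (i*m + j*n + k*q + l)" using assms(4) m n q by simp
  thus ?thesis by simp
qed

lemma shiftA:
  fixes g :: "real \<Rightarrow> real" and t :: real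
  assumes YE: "\<forall>x. YE x \<longleftrightarrow> Y x \<or> E x" and dis: "\<forall>x. Y x \<longrightarrow> \<not> E x"
    and e: "E e" and nt: "\<forall>x. E x \<longrightarrow> \<not> E (x + t)"
    and inv1: "\<forall>x. YE (x + t) = YE x" and inv2: "\<forall>x. Y (g x) = Y x"
    and gs: "(\<forall>x. g (x + t) = g x + t) \<or> (\<forall>x. g (x + t) = g x - t)"
  shows "\<exists>x. E x \<and> E (g x)"
proof (rule ccontr)
  assume H: "\<not> ?thesis"
  have "YE (e + t)" using inv1 YE e by metis
  hence "Y (e + t)" using YE nt e by metis
  hence Yg: "Y (g (e + t))" using inv2 by metis
  have "\<not> Y (g e)" using inv2 dis e by metis
  moreover have "\<not> E (g e)" using H e by blast
  ultimately have nYE: "\<not> YE (g e)" using YE by blast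
  from gs show False
  proof
    assume "\<forall>x. g (x + t) = g x + t"
    hence "Y (g e + t)" using Yg by metis
    hence "YE (g e + t)" using YE by blast
    thus False using inv1 nYE by metis
  next
    assume "\<forall>x. g (x + t) = g x - t"
    hence "Y (g e - t)" using Yg by metis
    hence "YE (g e - t + t)" using YE inv1 by metis
    thus False using nYE by simp
  qed
qed

lemma shiftB:
  fixes g :: "real \<Rightarrow> real" and t :: real
  assumes YE: "\<forall>x. YE x \<longleftrightarrow> Y x \<or> E x" and dis: "\<forall>x. Y x \<longrightarrow> \<not> E x"
    and e: "E e" and nt: "\<forall>x. E x \<longrightarrow> \<not> E (x + t)"
    and inv1: "\<forall>x. Y (x + t) = Y x" and inv2: "\<forall>x. YE (g x) = YE x"
    and gs: "(\<forall>x. g (x + t) = g x + t) \<or> (\<forall>x. g (x + t) = g x - t)"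
  shows "\<exists>x. E x \<and> E (g x)"
proof (rule ccontr)
  assume H: "\<not> ?thesis"
  have "YE (g e)" using inv2 YE e by metis
  moreover have "\<not> E (g e)" using H e by blast
  ultimately have Yge: "Y (g e)" using YE by blast
  have "Y (g (e + t))"
  proof -
    from gs show ?thesis
    proof
      assume "\<forall>x. g (x + t) = g x + t" thus ?thesis using Yge inv1 by metis
    next
      assume "\<forall>x. g (x + t) = g x - t"
      moreover have "Y (g e - t + t)" using Yge by simp
      ultimately show ?thesis using inv1 by metis
    qed
  qed
  hence "YE (e + t)" using YE inv2 by metis
  hence "Y (e + t)" using YE nt e by metis
  hence "Y e" using inv1 by metis
  thus False using dis e by blast
qed

lemma half_act: "o2_act g x + 1/2 - o2_act g (x + 1/2) \<in> \<int>"
  by (cases g; cases "fst g") (auto simp: o2_act_def)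

context cfg begin

lemma col_per: "periodic1 (col e d)"
proof -
  have c: "circ_eq (x + 1) y \<longleftrightarrow> circ_eq x y" for x y by (rule ce_cong) simp
  show ?thesis unfolding periodic1_def col_def c using Pp[unfolded periodic1_def] by simp
qed

lemma col_cong: "x - y \<in> \<int> \<Longrightarrow> col e d x = col e d y"
  using per_cong[OF col_per] by blast

lemma Ms_cong: assumes "x - y \<in> \<int>" shows "Ms e x = Ms e y"
proof -
  have "(x + 1/2) - (y + 1/2) \<in> \<int>" using assms by simp
  thus ?thesis using Ms_char[of e x R] Ms_char[of e y R] col_cong[OF assms] col_cong by metis
qed

lemma RRs_cong: assumes "x - y \<in> \<int>" shows "RRs d x = RRs d y"
proof -
  have "(x + 1/2) - (y + 1/2) \<in> \<int>" using assms by simp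
  thus ?thesis using RRs_char[of d x R] RRs_char[of d y R] col_cong[OF assms] col_cong by metis
qed

lemma pres:
  assumes "\<forall>x. col e d (o2_act g x) = col e d x"
  shows "\<forall>x. Ms e (o2_act g x) = Ms e x" "\<forall>x. RRs d (o2_act g x) = RRs d x"
proof -
  have h: "col e d (o2_act g x + 1/2) = col e d (x + 1/2)" for x
    using col_cong[OF half_act] assms by metis
  show "\<forall>x. Ms e (o2_act g x) = Ms e x" using Ms_char[of e _ d] h assms by metis
  show "\<forall>x. RRs d (o2_act g x) = RRs d x" using RRs_char[of d _ e] h assms by metis
qed

definition EP where "EP x \<longleftrightarrow> circ_eq x a \<or> circ_eq x (a + 1/2)"
definition Dgood where "Dgood D \<longleftrightarrow> D - 2 * a \<in> \<int> \<or> D - 2 * a - 1/2 \<in> \<int>"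

lemma MR_iff: "Ms R x \<longleftrightarrow> Ms B x \<or> circ_eq x 0" by (simp add: Ms_def)
lemma MB_dis: "Ms B x \<Longrightarrow> \<not> circ_eq x 0" by (simp add: Ms_def M0_def Wp_def)
lemma KR_iff: "RRs R x \<longleftrightarrow> RRs B x \<or> EP x" by (simp add: RRs_def EP_def)
lemma KB_dis: "RRs B x \<Longrightarrow> \<not> EP x" by (simp add: RRs_def RR0_def Wp_def EP_def)

lemma EP_D: assumes "EP x" "EP (- x + D)" shows "Dgood D"
proof -
  have c1: "x - a \<in> \<int> \<or> x - (a + 1/2) \<in> \<int>" using assms(1) by (simp add: EP_def circ_eq_def)
  have c2: "- x + D - a \<in> \<int> \<or> - x + D - (a + 1/2) \<in> \<int>" using assms(2) by (simp add: EP_def circ_eq_def)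
  from c1 show ?thesis
  proof
    assume h1: "x - a \<in> \<int>"
    from c2 show ?thesis
    proof
      assume h2: "- x + D - a \<in> \<int>"
      have "D - 2 * a \<in> \<int>" by (rule zcomb[OF h1 h2, where i=1 and j=1 and k=0]) simp
      thus ?thesis by (simp add: Dgood_def)
    next
      assume h2: "- x + D - (a + 1/2) \<in> \<int>"
      have "D - 2 * a - 1/2 \<in> \<int>" by (rule zcomb[OF h1 h2, where i=1 and j=1 and k=0]) simp
      thus ?thesis by (simp add: Dgood_def)
    qed
  next
    assume h1: "x - (a + 1/2) \<in> \<int>"
    from c2 show ?thesis
    proof
      assume h2: "- x + D - a \<in> \<int>"
      have "D - 2 * a - 1/2 \<in> \<int>" by (rule zcomb[OF h1 h2, where i=1 and j=1 and k=0]) simp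
      thus ?thesis by (simp add: Dgood_def)
    next
      assume h2: "- x + D - (a + 1/2) \<in> \<int>"
      have "D - 2 * a \<in> \<int>" by (rule zcomb[OF h1 h2, where i=1 and j=1 and k=1]) simp
      thus ?thesis by (simp add: Dgood_def)
    qed
  qed
qed

lemma Dgood_nI: assumes "Dgood D" shows "D \<notin> \<int>"
proof
  assume h0: "D \<in> \<int>"
  from assms show False unfolding Dgood_def
  proof
    assume h: "D - 2 * a \<in> \<int>"
    have "2 * a \<in> \<int>" by (rule zcomb[OF h0 h, where i=1 and j="-1" and k=0]) simp
    thus False using D1 by simp
  next
    assume h: "D - 2 * a - 1/2 \<in> \<int>"
    have "2 * a + 1/2 \<in> \<int>" by (rule zcomb[OF h0 h, where i=1 and j="-1" and k=0]) simp
    thus False using D3 by simp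
  qed
qed

lemma Dgood_diff: assumes "Dgood D" "Dgood D'" "D - D' \<notin> \<int>" shows "D - D' - 1/2 \<in> \<int>"
proof -
  from assms(1) show ?thesis unfolding Dgood_def
  proof
    assume h1: "D - 2 * a \<in> \<int>"
    from assms(2) show ?thesis unfolding Dgood_def
    proof
      assume h2: "D' - 2 * a \<in> \<int>"
      have "D - D' \<in> \<int>" by (rule zcomb[OF h1 h2, where i=1 and j="-1" and k=0]) simp
      thus ?thesis using assms(3) by simp
    next
      assume h2: "D' - 2 * a - 1/2 \<in> \<int>"
      show ?thesis by (rule zcomb[OF h1 h2, where i=1 and j="-1" and k="-1"]) simp
    qed
  next
    assume h1: "D - 2 * a - 1/2 \<in> \<int>"
    from assms(2) show ?thesis unfolding Dgood_def
    proof
      assume h2: "D' - 2 * a \<in> \<int>"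
      show ?thesis by (rule zcomb[OF h1 h2, where i=1 and j="-1" and k=0]) simp
    next
      assume h2: "D' - 2 * a - 1/2 \<in> \<int>"
      have "D - D' \<in> \<int>" by (rule zcomb[OF h1 h2, where i=1 and j="-1" and k=0]) simp
      thus ?thesis using assms(3) by simp
    qed
  qed
qed

end


context cfg begin

lemma LA:
  assumes t: "t \<notin> \<int>" and inv: "\<forall>x. Ms R (x + t) = Ms R x"
    and h: "\<forall>x. Ms B (o2_act h x) = Ms B x" and nid: "\<not> o2_is_id h"
  shows "\<exists>\<sigma>. h = (True, \<sigma>) \<and> 2 * \<sigma> \<in> \<int>"
proof -
  have nt: "\<forall>x. circ_eq x 0 \<longrightarrow> \<not> circ_eq (x + t) 0"
  proof (intro allI impI notI)
    fix x assume "circ_eq x 0" "circ_eq (x + t) 0"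
    hence h1: "x + t \<in> \<int>" and h2: "x \<in> \<int>" by (simp_all add: circ_eq_def)
    have "t \<in> \<int>" by (rule zcomb[OF h1 h2, where i=1 and j="-1" and k=0]) simp
    thus False using t by simp
  qed
  have "\<exists>x. circ_eq x 0 \<and> circ_eq (o2_act h x) 0"
    by (rule shiftA[where Y="Ms B" and YE="Ms R" and e=0 and t=t])
      (use MR_iff MB_dis inv h act_shift nt in \<open>auto simp: circ_eq_def\<close>)
  then obtain x where x: "x \<in> \<int>" "o2_act h x \<in> \<int>" by (auto simp: circ_eq_def)
  obtain b s where hb: "h = (b, s)" by (cases h)
  show ?thesis
  proof (cases b)
    case False
    hence h1: "x + s \<in> \<int>" using x hb by simp
    have "s \<in> \<int>" by (rule zcomb[OF h1 x(1), where i=1 and j="-1" and k=0]) simp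
    thus ?thesis using nid hb False isid_F by simp
  next
    case True
    hence h1: "- x + 2 * s \<in> \<int>" using x hb by simp
    have "2 * s \<in> \<int>" by (rule zcomb[OF h1 x(1), where i=1 and j=1 and k=0]) simp
    thus ?thesis using hb True by blast
  qed
qed

lemma LB:
  assumes t: "t \<notin> \<int>" and inv: "\<forall>x. Ms B (x + t) = Ms B x"
    and h: "\<forall>x. Ms R (- x + D) = Ms R x"
  shows "D \<in> \<int>"
proof -
  have nt: "\<forall>x. circ_eq x 0 \<longrightarrow> \<not> circ_eq (x + t) 0"
  proof (intro allI impI notI)
    fix x assume "circ_eq x 0" "circ_eq (x + t) 0"
    hence h1: "x + t \<in> \<int>" and h2: "x \<in> \<int>" by (simp_all add: circ_eq_def)
    have "t \<in> \<int>" by (rule zcomb[OF h1 h2, where i=1 and j="-1" and k=0]) simp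
    thus False using t by simp
  qed
  have gs: "(\<forall>x. (\<lambda>x. - x + D) (x + t) = (\<lambda>x. - x + D) x + t) \<or>
            (\<forall>x. (\<lambda>x. - x + D) (x + t) = (\<lambda>x. - x + D) x - t)" by simp
  have "\<exists>x. circ_eq x 0 \<and> circ_eq ((\<lambda>x. - x + D) x) 0"
    by (rule shiftB[where Y="Ms B" and YE="Ms R" and e=0 and t=t, OF _ _ _ nt inv _ gs])
      (use MR_iff MB_dis h in \<open>auto simp: circ_eq_def\<close>)
  then obtain x where x: "x \<in> \<int>" "- x + D \<in> \<int>" by (auto simp: circ_eq_def)
  show "D \<in> \<int>" by (rule zcomb[OF x(2) x(1), where i=1 and j=1 and k=0]) simp
qed

lemma EP_nt:
  assumes t: "t \<notin> \<int>" and inv: "\<forall>x. Ms R (x + t) = Ms R x"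
  shows "\<forall>x. EP x \<longrightarrow> \<not> EP (x + t)"
proof (intro allI impI notI)
  fix x assume e1: "EP x" and e2: "EP (x + t)"
  have c1: "x - a \<in> \<int> \<or> x - (a + 1/2) \<in> \<int>" using e1 by (simp add: EP_def circ_eq_def)
  have c2: "x + t - a \<in> \<int> \<or> x + t - (a + 1/2) \<in> \<int>" using e2 by (simp add: EP_def circ_eq_def)
  have "t \<in> \<int> \<or> t - 1/2 \<in> \<int>"
  proof -
    { assume h1: "x - a \<in> \<int>" and h2: "x + t - a \<in> \<int>"
      have "t \<in> \<int>" by (rule zcomb[OF h1 h2, where i="-1" and j=1 and k=0]) simp }
    moreover
    { assume h1: "x - a \<in> \<int>" and h2: "x + t - (a + 1/2) \<in> \<int>"
      have "t - 1/2 \<in> \<int>" by (rule zcomb[OF h1 h2, where i="-1" and j=1 and k=0]) simp }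
    moreover
    { assume h1: "x - (a + 1/2) \<in> \<int>" and h2: "x + t - a \<in> \<int>"
      have "t - 1/2 \<in> \<int>" by (rule zcomb[OF h1 h2, where i="-1" and j=1 and k="-1"]) simp }
    moreover
    { assume h1: "x - (a + 1/2) \<in> \<int>" and h2: "x + t - (a + 1/2) \<in> \<int>"
      have "t \<in> \<int>" by (rule zcomb[OF h1 h2, where i="-1" and j=1 and k=0]) simp }
    ultimately show ?thesis using c1 c2 by blast
  qed
  hence th: "t - 1/2 \<in> \<int>" using t by blast
  have "Ms R 0" by (simp add: Ms_def circ_eq_def)
  hence "Ms R t" using inv by (metis add_0)
  moreover have "circ_eq t (1/2)" using th by (simp add: circ_eq_def)
  ultimately show False using t by (auto simp: Ms_def M0_def Wp_def circ_eq_def)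
qed

lemma LK_R:
  assumes nt: "\<forall>x. EP x \<longrightarrow> \<not> EP (x + t)" and inv: "\<forall>x. RRs R (x + t) = RRs R x"
    and h: "\<forall>x. RRs B (o2_act h x) = RRs B x"
  shows "\<exists>x. EP x \<and> EP (o2_act h x)"
  by (rule shiftA[where Y="RRs B" and YE="RRs R" and e=a and t=t, OF _ _ _ nt inv h act_shift])
    (use KR_iff KB_dis in \<open>auto simp: EP_def circ_eq_def\<close>)

lemma LK_B:
  assumes nt: "\<forall>x. EP x \<longrightarrow> \<not> EP (x + t)" and inv: "\<forall>x. RRs B (x + t) = RRs B x"
    and h: "\<forall>x. RRs R (o2_act h x) = RRs R x"
  shows "\<exists>x. EP x \<and> EP (o2_act h x)"
  by (rule shiftB[where Y="RRs B" and YE="RRs R" and e=a and t=t, OF _ _ _ nt inv h act_shift])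
    (use KR_iff KB_dis in \<open>auto simp: EP_def circ_eq_def\<close>)

lemma refl_no: assumes "2 * s \<in> \<int>" "EP x" "EP (- x + 2 * s)" shows False
  using EP_D[OF assms(2,3)] Dgood_nI assms(1) by blast

lemma LD:
  assumes i1: "\<forall>x. RRs R (- x + D1) = RRs R x" and i2: "\<forall>x. RRs B (- x + D2) = RRs B x"
    and d: "D1 - D2 \<in> \<int>"
  shows "Dgood D1"
proof -
  have ra: "RRs R a" by (simp add: RRs_def circ_eq_def)
  have rb: "\<not> RRs B a" by (simp add: RRs_def RR0_def Wp_def circ_eq_def)
  have "RRs R (- a + D1)" using i1 ra by blast
  moreover have "\<not> RRs B (- a + D2)" using i2 rb by blast
  moreover have "(- a + D1) - (- a + D2) \<in> \<int>" using d by simp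
  ultimately have "RRs R (- a + D1) \<and> \<not> RRs B (- a + D1)" using RRs_cong by blast
  hence "EP (- a + D1)" using KR_iff by blast
  moreover have "EP a" by (simp add: EP_def circ_eq_def)
  ultimately show ?thesis using EP_D by blast
qed

lemma main: "\<exists>e d. distinguishing (col e d)"
proof (rule ccontr)
  assume "\<not> ?thesis"
  hence ND: "\<And>e d. \<exists>g. \<not> o2_is_id g \<and> (\<forall>x. col e d (o2_act g x) = col e d x)"
    unfolding distinguishing_def by blast
  obtain gRR where gRR: "\<not> o2_is_id gRR" "\<forall>x. col R R (o2_act gRR x) = col R R x" using ND by blast
  obtain gRB where gRB: "\<not> o2_is_id gRB" "\<forall>x. col R B (o2_act gRB x) = col R B x" using ND by blast
  obtain gBR where gBR: "\<not> o2_is_id gBR" "\<forall>x. col B R (o2_act gBR x) = col B R x" using ND by blast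
  obtain gBB where gBB: "\<not> o2_is_id gBB" "\<forall>x. col B B (o2_act gBB x) = col B B x" using ND by blast
  note pRR = pres[OF gRR(2)] and pRB = pres[OF gRB(2)] and pBR = pres[OF gBR(2)] and pBB = pres[OF gBB(2)]
  have S1: "\<exists>\<sigma>. g = (True, \<sigma>)"
    if g: "\<not> o2_is_id g" "\<forall>x. Ms R (o2_act g x) = Ms R x" "\<forall>x. RRs d (o2_act g x) = RRs d x" for g d
  proof -
    obtain b t where gb: "g = (b, t)" by (cases g)
    show ?thesis
    proof (cases b)
      case True thus ?thesis using gb by blast
    next
      case False
      hence tn: "t \<notin> \<int>" using g(1) gb isid_F by simp
      have iM: "\<forall>x. Ms R (x + t) = Ms R x" using g(2) gb False by simp
      have iK: "\<forall>x. RRs d (x + t) = RRs d x" using g(3) gb False by simp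
      have nt: "\<forall>x. EP x \<longrightarrow> \<not> EP (x + t)" by (rule EP_nt[OF tn iM])
      show ?thesis
      proof (cases d)
        case R
        obtain s where s: "gBB = (True, s)" "2 * s \<in> \<int>" using LA[OF tn iM pBB(1) gBB(1)] by blast
        obtain x where "EP x" "EP (o2_act gBB x)" using LK_R[OF nt iK[unfolded R] pBB(2)] by blast
        hence False using refl_no[OF s(2), of x] s(1) by simp
        thus ?thesis ..
      next
        case B
        obtain s where s: "gBR = (True, s)" "2 * s \<in> \<int>" using LA[OF tn iM pBR(1) gBR(1)] by blast
        obtain x where "EP x" "EP (o2_act gBR x)" using LK_B[OF nt iK[unfolded B] pBR(2)] by blast
        hence False using refl_no[OF s(2), of x] s(1) by simp
        thus ?thesis ..
      qed
    qed
  qed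
  obtain s1 where s1: "gRR = (True, s1)" using S1[OF gRR(1) pRR(1) pRR(2)] by blast
  obtain s2 where s2: "gRB = (True, s2)" using S1[OF gRB(1) pRB(1) pRB(2)] by blast
  obtain D where D: "Dgood D" "\<forall>x. Ms R (- x + D) = Ms R x"
  proof (cases "2 * s1 - 2 * s2 \<in> \<int>")
    case True
    have "Dgood (2 * s1)" using LD[of "2 * s1" "2 * s2"] pRR(2) pRB(2) s1 s2 True by simp
    moreover have "\<forall>x. Ms R (- x + 2 * s1) = Ms R x" using pRR(1) s1 by simp
    ultimately show ?thesis using that by blast
  next
    case False
    have iM: "\<forall>x. Ms R (x + (2 * s1 - 2 * s2)) = Ms R x"
    proof
      fix x
      have "Ms R (x + (2 * s1 - 2 * s2)) = Ms R (- (- x + 2 * s2) + 2 * s1)" by (simp add: algebra_simps)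
      also have "\<dots> = Ms R (- x + 2 * s2)"
      proof -
        have "Ms R (o2_act gRR (- x + 2 * s2)) = Ms R (- x + 2 * s2)" using pRR(1) by blast
        thus ?thesis using s1 by simp
      qed
      also have "\<dots> = Ms R x" using pRB(1) s2 by simp
      finally show "Ms R (x + (2 * s1 - 2 * s2)) = Ms R x" .
    qed
    obtain u1 where u1: "gBR = (True, u1)" "2 * u1 \<in> \<int>" using LA[OF False iM pBR(1) gBR(1)] by blast
    obtain u2 where u2: "gBB = (True, u2)" "2 * u2 \<in> \<int>" using LA[OF False iM pBB(1) gBB(1)] by blast
    have "2 * u1 - 2 * u2 \<in> \<int>" using u1 u2 by (simp add: Ints_diff)
    hence "Dgood (2 * u1)" using LD[of "2 * u1" "2 * u2"] pBR(2) pBB(2) u1 u2 by simp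
    thus ?thesis using Dgood_nI u1(2) by blast
  qed
  have S3: "\<exists>\<sigma>. g = (True, \<sigma>)" if g: "\<not> o2_is_id g" "\<forall>x. Ms B (o2_act g x) = Ms B x" for g
  proof -
    obtain b t where gb: "g = (b, t)" by (cases g)
    show ?thesis
    proof (cases b)
      case True thus ?thesis using gb by blast
    next
      case False
      hence tn: "t \<notin> \<int>" using g(1) gb isid_F by simp
      have iM: "\<forall>x. Ms B (x + t) = Ms B x" using g(2) gb False by simp
      have "D \<in> \<int>" by (rule LB[OF tn iM D(2)])
      thus ?thesis using Dgood_nI D(1) by blast
    qed
  qed
  obtain u1 where u1: "gBR = (True, u1)" using S3[OF gBR(1) pBR(1)] by blast
  obtain u2 where u2: "gBB = (True, u2)" using S3[OF gBB(1) pBB(1)] by blast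
  have du: "2 * u1 - 2 * u2 \<in> \<int>"
  proof (rule ccontr)
    assume nd: "2 * u1 - 2 * u2 \<notin> \<int>"
    have iM: "\<forall>x. Ms B (x + (2 * u1 - 2 * u2)) = Ms B x"
    proof
      fix x
      have "Ms B (x + (2 * u1 - 2 * u2)) = Ms B (- (- x + 2 * u2) + 2 * u1)" by (simp add: algebra_simps)
      also have "\<dots> = Ms B (- x + 2 * u2)"
      proof -
        have "Ms B (o2_act gBR (- x + 2 * u2)) = Ms B (- x + 2 * u2)" using pBR(1) by blast
        thus ?thesis using u1 by simp
      qed
      also have "\<dots> = Ms B x" using pBB(1) u2 by simp
      finally show "Ms B (x + (2 * u1 - 2 * u2)) = Ms B x" .
    qed
    have "D \<in> \<int>" by (rule LB[OF nd iM D(2)])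
    thus False using Dgood_nI D(1) by blast
  qed
  define D' where "D' = 2 * u1"
  have D'g: "Dgood D'" unfolding D'_def using LD[of "2 * u1" "2 * u2"] pBR(2) pBB(2) u1 u2 du by simp
  have D'i: "\<forall>x. Ms B (- x + D') = Ms B x" unfolding D'_def using pBR(1) u1 by simp
  have DnI: "D \<notin> \<int>" using Dgood_nI D(1) .
  have "Ms R 0" by (simp add: Ms_def circ_eq_def)
  moreover have "Ms R (- 0 + D) = Ms R 0" using D(2) by blast
  ultimately have MRD: "Ms R D" by simp
  have "\<not> circ_eq D 0" using DnI by (simp add: circ_eq_def)
  hence M0D: "M0 D" using MRD by (simp add: Ms_def)
  hence MBD: "Ms B D" by (simp add: Ms_def)
  show False
  proof (cases "D - D' \<in> \<int>")
    case True
    have "Ms B (- D + D')" using D'i MBD by blast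
    moreover have "- D + D' \<in> \<int>" by (rule zcomb1[OF True, where i="-1" and k=0]) simp
    hence "circ_eq (- D + D') 0" by (simp add: circ_eq_def)
    ultimately show False using MB_dis by blast
  next
    case False
    have h: "D - D' - 1/2 \<in> \<int>" using Dgood_diff[OF D(1) D'g False] .
    have "Ms B (- D + D')" using D'i MBD by blast
    hence "Ms R (- D + D')" using MR_iff by blast
    hence "Ms R (- (- D + D') + D)" using D(2) by blast
    moreover have "(- (- D + D') + D) - (D + 1/2) \<in> \<int>" using h by (simp add: algebra_simps)
    ultimately have "Ms R (D + 1/2)" using Ms_cong by blast
    thus False using M0D unfolding Ms_def M0_def Wp_def sh1 by auto
  qed
qed

end

theorem lemma2p3p4:
  fixes a :: real
  assumes "\<not> circ_eq a 0" and "\<not> circ_eq a (1/2)"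
    and "\<not> circ_eq a (1/4)" and "\<not> circ_eq a (-1/4)"
  shows "prop_P {0, a, 1/2, a + 1/2}"
proof -
  have A0: "a \<notin> \<int>" using assms(1) by (simp add: circ_eq_def)
  have A1: "a - 1/2 \<notin> \<int>" using assms(2) by (simp add: circ_eq_def)
  have A2: "a - 1/4 \<notin> \<int>" using assms(3) by (simp add: circ_eq_def)
  have A3: "a + 1/4 \<notin> \<int>" using assms(4) by (simp add: circ_eq_def)
  have cf: "cfg a p" if "periodic1 p" for p
    using A0 A1 A2 A3 that by (simp add: cfg_def)
  have pR: "periodic1 (\<lambda>_::real. R)" by (simp add: periodic1_def)
  have TS: "trivial_pw_stab {0, a, 1/2, a + 1/2}"
    unfolding trivial_pw_stab_def
  proof (intro allI impI)
    fix g :: o2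
    assume H: "\<forall>w\<in>{0, a, 1/2, a + 1/2}. circ_eq (o2_act g w) w"
    obtain b s where gb: "g = (b, s)" by (cases g)
    show "o2_is_id g"
    proof (cases b)
      case False
      have "circ_eq (o2_act g 0) 0" using H by simp
      hence "s \<in> \<int>" using gb False by (simp add: circ_eq_def)
      thus ?thesis using gb False isid_F by simp
    next
      case True
      have "circ_eq (o2_act g 0) 0" using H by simp
      hence h1: "2 * s \<in> \<int>" using gb True by (simp add: circ_eq_def)
      have "circ_eq (o2_act g a) a" using H by simp
      hence h2: "- a + 2 * s - a \<in> \<int>" using gb True by (simp add: circ_eq_def)
      have "2 * a \<in> \<int>" by (rule zcomb[OF h1 h2, where i=1 and j="-1" and k=0]) simp
      thus ?thesis using cfg.D1[OF cf[OF pR]] by simp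
    qed
  qed
  show ?thesis
    unfolding prop_P_def
  proof (intro conjI TS allI impI)
    fix p :: "real \<Rightarrow> color"
    assume pp: "periodic1 p"
    interpret C: cfg a p by (rule cf[OF pp])
    obtain e d where dist: "distinguishing (C.col e d)" using C.main by blast
    show "\<exists>c. periodic1 c \<and> (\<forall>x. \<not> in_circ_set x {0, a, 1/2, a + 1/2} \<longrightarrow> c x = p x) \<and> distinguishing c"
    proof (intro exI conjI allI impI)
      show "periodic1 (C.col e d)" by (rule C.col_per)
      show "distinguishing (C.col e d)" by (rule dist)
      fix x assume "\<not> in_circ_set x {0, a, 1/2, a + 1/2}"
      thus "C.col e d x = p x" by (simp add: in_circ_set_def C.col_def)
    qed
  qed
qed

end
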